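(* Let $L$ be an $n$-dimensional nilpotent Lie algebra. If $\dim\mathcal{M}^{(2)}(L)=\frac13 n(n-1)(n+1)$, then $L\cong A(n)$.
   Context: All Lie algebras are over a fixed field. For a Lie algebra $L$ with free presentation $L\cong F/R$, the $2$-nilpotent multiplier is $\mathcal{M}^{(2)}(L)=(R\cap F^{3})/[[R,F],F]$, where $F^3=[[F,F],F]$. $A(n)$ denotes the abelian Lie algebra of dimension $n$. *)

theory Defs
  imports Complex_Main
begin

section \<open>Lie algebras over a field (the whole type 'v is the underlying vector space)\<close>

definition lie_algebra :: "('k::field \<Rightarrow> 'v::ab_group_add \<Rightarrow> 'v) \<Rightarrow> ('v \<Rightarrow> 'v \<Rightarrow> 'v) \<Rightarrow> bool" where
  "lie_algebra scale br \<longleftrightarrow> vector_space scale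
     \<and> (\<forall>x y z. br (x + y) z = br x z + br y z)
     \<and> (\<forall>x y z. br x (y + z) = br x y + br x z)
     \<and> (\<forall>c x y. br (scale c x) y = scale c (br x y))
     \<and> (\<forall>c x y. br x (scale c y) = scale c (br x y))
     \<and> (\<forall>x. br x x = 0)
     \<and> (\<forall>x y z. br x (br y z) + br y (br z x) + br z (br x y) = 0)"

definition lie_dim_eq :: "('k::field \<Rightarrow> 'v::ab_group_add \<Rightarrow> 'v) \<Rightarrow> nat \<Rightarrow> bool" where
  "lie_dim_eq scale n \<longleftrightarrow> (\<exists>B. finite B \<and> module.span scale B = UNIV) \<and> vector_space.dim scale UNIV = n"

text \<open>Lower central series: L^1 = L (index 0 here), L^{i+1} = [L^i, L].\<close>
primrec lower_central :: "('k::field \<Rightarrow> 'v::ab_group_add \<Rightarrow> 'v) \<Rightarrow> ('v \<Rightarrow> 'v \<Rightarrow> 'v) \<Rightarrow> nat \<Rightarrow> 'v set" where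
  "lower_central scale br 0 = UNIV"
| "lower_central scale br (Suc i) = module.span scale {br x y | x y. x \<in> lower_central scale br i}"

definition lie_nilpotent :: "('k::field \<Rightarrow> 'v::ab_group_add \<Rightarrow> 'v) \<Rightarrow> ('v \<Rightarrow> 'v \<Rightarrow> 'v) \<Rightarrow> bool" where
  "lie_nilpotent scale br \<longleftrightarrow> (\<exists>c. lower_central scale br c = {0})"

text \<open>The abelian Lie algebra A(n): carrier k^n, realised as functions nat => k vanishing
  outside {..<n}, pointwise linear structure and zero bracket.\<close>
definition abelian_carrier :: "nat \<Rightarrow> (nat \<Rightarrow> 'k::field) set" where
  "abelian_carrier n = {v. \<forall>i\<ge>n. v i = 0}"

definition iso_to_abelian :: "('k::field \<Rightarrow> 'v::ab_group_add \<Rightarrow> 'v) \<Rightarrow> ('v \<Rightarrow> 'v \<Rightarrow> 'v) \<Rightarrow> nat \<Rightarrow> bool" where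
  "iso_to_abelian scale br n \<longleftrightarrow> (\<exists>f :: 'v \<Rightarrow> nat \<Rightarrow> 'k.
      bij_betw f UNIV (abelian_carrier n)
    \<and> (\<forall>x y. f (x + y) = (\<lambda>i. f x i + f y i))
    \<and> (\<forall>c x. f (scale c x) = (\<lambda>i. c * f x i))
    \<and> (\<forall>x y. f (br x y) = (\<lambda>i. 0)))"

section \<open>Free Lie algebra on the generators 'x, realised inside the free associative
  algebra k<'x> (Witt): noncommutative polynomials = finitely supported functions on words\<close>

definition fa_mult :: "('x list \<Rightarrow> 'k::field) \<Rightarrow> ('x list \<Rightarrow> 'k) \<Rightarrow> ('x list \<Rightarrow> 'k)" where
  "fa_mult p q = (\<lambda>w. \<Sum>i\<le>length w. p (take i w) * q (drop i w))"

definition fa_comm :: "('x list \<Rightarrow> 'k::field) \<Rightarrow> ('x list \<Rightarrow> 'k) \<Rightarrow> ('x list \<Rightarrow> 'k)" where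
  "fa_comm p q = (\<lambda>w. fa_mult p q w - fa_mult q p w)"

definition fa_gen :: "'x \<Rightarrow> ('x list \<Rightarrow> 'k::field)" where
  "fa_gen x = (\<lambda>w. if w = [x] then 1 else 0)"

definition fa_scale :: "'k::field \<Rightarrow> ('x list \<Rightarrow> 'k) \<Rightarrow> ('x list \<Rightarrow> 'k)" where
  "fa_scale c p = (\<lambda>w. c * p w)"

definition fa_add :: "('x list \<Rightarrow> 'k::field) \<Rightarrow> ('x list \<Rightarrow> 'k) \<Rightarrow> ('x list \<Rightarrow> 'k)" where
  "fa_add p q = (\<lambda>w. p w + q w)"

inductive_set fa_span :: "('x list \<Rightarrow> 'k::field) set \<Rightarrow> ('x list \<Rightarrow> 'k) set" for S where
  base: "p \<in> S \<Longrightarrow> p \<in> fa_span S"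
| zero: "(\<lambda>w. 0) \<in> fa_span S"
| add: "p \<in> fa_span S \<Longrightarrow> q \<in> fa_span S \<Longrightarrow> fa_add p q \<in> fa_span S"
| scale: "p \<in> fa_span S \<Longrightarrow> fa_scale c p \<in> fa_span S"

inductive_set free_lie :: "('x list \<Rightarrow> 'k::field) set" where
  gen: "fa_gen x \<in> free_lie"
| zero: "(\<lambda>w. 0) \<in> free_lie"
| add: "p \<in> free_lie \<Longrightarrow> q \<in> free_lie \<Longrightarrow> fa_add p q \<in> free_lie"
| scale: "p \<in> free_lie \<Longrightarrow> fa_scale c p \<in> free_lie"
| comm: "p \<in> free_lie \<Longrightarrow> q \<in> free_lie \<Longrightarrow> fa_comm p q \<in> free_lie"

definition fa_bracket_sp :: "('x list \<Rightarrow> 'k::field) set \<Rightarrow> ('x list \<Rightarrow> 'k) set \<Rightarrow> ('x list \<Rightarrow> 'k) set" where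
  "fa_bracket_sp A B = fa_span {fa_comm a b | a b. a \<in> A \<and> b \<in> B}"

definition free_presentation ::
  "('k::field \<Rightarrow> 'v::ab_group_add \<Rightarrow> 'v) \<Rightarrow> ('v \<Rightarrow> 'v \<Rightarrow> 'v) \<Rightarrow> (('x list \<Rightarrow> 'k) \<Rightarrow> 'v) \<Rightarrow> bool" where
  "free_presentation scale br \<pi> \<longleftrightarrow>
     (\<forall>p\<in>free_lie. \<forall>q\<in>free_lie. \<pi> (fa_add p q) = \<pi> p + \<pi> q)
   \<and> (\<forall>c. \<forall>p\<in>free_lie. \<pi> (fa_scale c p) = scale c (\<pi> p))
   \<and> (\<forall>p\<in>free_lie. \<forall>q\<in>free_lie. \<pi> (fa_comm p q) = br (\<pi> p) (\<pi> q))
   \<and> \<pi> ` free_lie = UNIV"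

text \<open>dim (B/A) = m for subspaces A of B (of k<'x>): there is a finite family S in B of
  card m, linearly independent modulo A, with B contained in span (A \<union> S).\<close>
definition fa_quot_dim_eq :: "('x list \<Rightarrow> 'k::field) set \<Rightarrow> ('x list \<Rightarrow> 'k) set \<Rightarrow> nat \<Rightarrow> bool" where
  "fa_quot_dim_eq B A m \<longleftrightarrow> (\<exists>S. S \<subseteq> B \<and> finite S \<and> card S = m
     \<and> B \<subseteq> fa_span (A \<union> S)
     \<and> (\<forall>c. (\<lambda>w. \<Sum>s\<in>S. c s * s w) \<in> A \<longrightarrow> (\<forall>s\<in>S. c s = 0)))"

text \<open>dim M^(2)(L) = m, computed from the presentation \<pi> : F -> L with R = ker \<pi>:
  M^(2)(L) = (R \<inter> F^3) / [[R,F],F].\<close>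
definition two_nilpotent_multiplier_dim_eq ::
  "('k::field \<Rightarrow> 'v::ab_group_add \<Rightarrow> 'v) \<Rightarrow> ('v \<Rightarrow> 'v \<Rightarrow> 'v) \<Rightarrow> (('x list \<Rightarrow> 'k) \<Rightarrow> 'v) \<Rightarrow> nat \<Rightarrow> bool" where
  "two_nilpotent_multiplier_dim_eq scale br \<pi> m \<longleftrightarrow>
     (let F = (free_lie :: ('x list \<Rightarrow> 'k) set);
          R = {p \<in> F. \<pi> p = 0};
          F3 = fa_bracket_sp (fa_bracket_sp F F) F;
          RFF = fa_bracket_sp (fa_bracket_sp R F) F
      in fa_quot_dim_eq (R \<inter> F3) RFF m)"

end

theory Submission
  imports Defs "HOL-Library.Function_Algebras"
begin


lemma fa_add_eq: "fa_add p q = p + q" by (simp add: fa_add_def fun_eq_iff)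

lemma fa_mult_add1: "fa_mult (p + q) r = fa_mult p r + fa_mult q r"
  by (simp add: fa_mult_def fun_eq_iff algebra_simps sum.distrib)
lemma fa_mult_add2: "fa_mult r (p + q) = fa_mult r p + fa_mult r q"
  by (simp add: fa_mult_def fun_eq_iff algebra_simps sum.distrib)
lemma fa_mult_scale1: "fa_mult (fa_scale c p) q = fa_scale c (fa_mult p q)"
  by (simp add: fa_mult_def fa_scale_def fun_eq_iff algebra_simps sum_distrib_left)
lemma fa_mult_scale2: "fa_mult q (fa_scale c p) = fa_scale c (fa_mult q p)"
  by (simp add: fa_mult_def fa_scale_def fun_eq_iff algebra_simps sum_distrib_left)

lemma fa_mult_assoc: "fa_mult (fa_mult p q) r = fa_mult p (fa_mult q r)"
proof (rule ext)
  fix w :: "'a list"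
  define L where "L = length w"
  define g where "g j i = p (take j w) * q (take (i - j) (drop j w)) * r (drop i w)" for j i
  have "fa_mult (fa_mult p q) r w = (\<Sum>i\<le>L. \<Sum>j\<in>{j\<in>{..L}. j \<le> i}. g j i)"
    unfolding fa_mult_def L_def
  proof (rule sum.cong[OF refl])
    fix i assume i: "i \<in> {..length w}"
    have e: "{j\<in>{..length w}. j \<le> i} = {..i}" using i by auto
    show "(\<Sum>ia\<le>length (take i w). p (take ia (take i w)) * q (drop ia (take i w))) * r (drop i w) =
       (\<Sum>j\<in>{j\<in>{..length w}. j \<le> i}. g j i)"
      unfolding e using i
      by (auto simp: g_def sum_distrib_right min_def take_drop intro!: sum.cong)
  qed
  also have "\<dots> = (\<Sum>j\<le>L. \<Sum>i\<in>{i\<in>{..L}. j \<le> i}. g j i)"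
    by (rule sum.swap_restrict) auto
  also have "\<dots> = fa_mult p (fa_mult q r) w"
    unfolding fa_mult_def L_def
  proof (rule sum.cong[OF refl])
    fix j assume j: "j \<in> {..length w}"
    have "(\<Sum>i\<in>{i\<in>{..length w}. j \<le> i}. g j i) = (\<Sum>i\<in>{j..length w}. g j i)"
      by (rule sum.cong) auto
    also have "\<dots> = (\<Sum>l\<in>{0..length w - j}. g j (l + j))"
      using sum.shift_bounds_cl_nat_ivl[of "g j" 0 j "length w - j"] j by simp
    also have "\<dots> = (\<Sum>l\<le>length (drop j w). g j (l + j))"
      by (simp add: atLeast0AtMost)
    finally show "(\<Sum>i\<in>{i\<in>{..length w}. j \<le> i}. g j i) =
        p (take j w) * (\<Sum>ia\<le>length (drop j w). q (take ia (drop j w)) * r (drop ia (drop j w)))"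
      by (simp add: g_def sum_distrib_left mult.assoc add.commute)
  qed
  finally show "fa_mult (fa_mult p q) r w = fa_mult p (fa_mult q r) w" .
qed

lemma fa_mult_diff1: "fa_mult (p - q) r = fa_mult p r - fa_mult q r"
  by (simp add: fa_mult_def fun_eq_iff algebra_simps sum_subtractf)
lemma fa_mult_diff2: "fa_mult r (p - q) = fa_mult r p - fa_mult r q"
  by (simp add: fa_mult_def fun_eq_iff algebra_simps sum_subtractf)

lemma fa_comm_eq: "fa_comm p q = fa_mult p q - fa_mult q p"
  by (simp add: fa_comm_def fun_eq_iff)

lemma fa_comm_anti: "fa_comm q p = - fa_comm p q"
  by (simp add: fa_comm_eq)
lemma fa_comm_self: "fa_comm p p = 0"
  by (simp add: fa_comm_eq)
lemma fa_comm_add1: "fa_comm (p + q) r = fa_comm p r + fa_comm q r"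
  by (simp add: fa_comm_eq fa_mult_add1 fa_mult_add2)
lemma fa_comm_add2: "fa_comm r (p + q) = fa_comm r p + fa_comm r q"
  by (simp add: fa_comm_eq fa_mult_add1 fa_mult_add2)
lemma fa_scale_diff: "fa_scale c (p - q) = fa_scale c p - fa_scale c q"
  by (simp add: fa_scale_def fun_eq_iff algebra_simps)
lemma fa_comm_scale1: "fa_comm (fa_scale c p) q = fa_scale c (fa_comm p q)"
  by (simp add: fa_comm_eq fa_mult_scale1 fa_mult_scale2 fa_scale_diff)
lemma fa_comm_scale2: "fa_comm q (fa_scale c p) = fa_scale c (fa_comm q p)"
  by (simp add: fa_comm_eq fa_mult_scale1 fa_mult_scale2 fa_scale_diff)

lemma fa_jacobi: "fa_comm (fa_comm a b) c + fa_comm (fa_comm b c) a + fa_comm (fa_comm c a) b = 0"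
  by (simp add: fa_comm_eq fa_mult_diff1 fa_mult_diff2 fa_mult_assoc)

interpretation fa: vector_space "fa_scale :: 'k::field \<Rightarrow> ('x list \<Rightarrow> 'k) \<Rightarrow> _"
  by unfold_locales (simp_all add: fa_scale_def fun_eq_iff algebra_simps)

lemma fa_span_eq: "fa_span S = fa.span S"
proof
  show "fa_span S \<subseteq> fa.span S"
  proof
    fix p assume "p \<in> fa_span S" then show "p \<in> fa.span S"
    proof induct
      case (base p) then show ?case by (rule fa.span_base)
    next
      case zero then show ?case using fa.span_zero by (simp add: zero_fun_def)
    next
      case (add p q) then show ?case using fa.span_add[of p S q] by (simp add: plus_fun_def fa_add_def)
    next
      case (scale p c) then show ?case by (simp add: fa.span_scale)
    qed
  qed
  show "fa.span S \<subseteq> fa_span S"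
  proof (rule fa.span_minimal)
    show "S \<subseteq> fa_span S" by (auto intro: fa_span.base)
    show "fa.subspace (fa_span S)"
      unfolding fa.subspace_def
      using fa_span.zero[of S] fa_span.add[of _ S] fa_span.scale[of _ S]
      by (auto simp: zero_fun_def fa_add_eq)
  qed
qed

lemma free_lie_subspace: "fa.subspace free_lie"
  unfolding fa.subspace_def
  using free_lie.zero free_lie.add free_lie.scale
  by (auto simp: zero_fun_def fa_add_eq)

lemma fun_sum_apply: "(\<Sum>s\<in>S. f s) w = (\<Sum>s\<in>S. f s w)"
  by (induction S rule: infinite_finite_induct) auto

lemma quot_card_bound:
  fixes A S T :: "('x list \<Rightarrow> 'k::field) set"
  assumes A: "fa.subspace A" and fS: "finite S" and fT: "finite T"
    and sub: "S \<subseteq> fa.span (A \<union> T)"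
    and ind: "\<forall>c. (\<lambda>w. \<Sum>s\<in>S. c s * s w) \<in> A \<longrightarrow> (\<forall>s\<in>S. c s = 0)"
  shows "card S \<le> card T"
proof -
  have ind': "\<forall>s\<in>S. c s = 0" if "(\<Sum>s\<in>S. fa_scale (c s) s) \<in> A" for c
  proof -
    have "(\<Sum>s\<in>S. fa_scale (c s) s) = (\<lambda>w. \<Sum>s\<in>S. c s * s w)"
      by (simp add: fun_eq_iff fun_sum_apply fa_scale_def)
    then have "(\<lambda>w. \<Sum>s\<in>S. c s * s w) \<in> A" using that by simp
    then show ?thesis using ind by blast
  qed
  have "\<forall>s\<in>S. \<exists>t. t \<in> fa.span T \<and> s - t \<in> A"
  proof
    fix s assume "s \<in> S"
    then have "s \<in> fa.span (A \<union> T)" using sub by auto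
    then obtain a t where "a \<in> fa.span A" "t \<in> fa.span T" "s = a + t"
      unfolding fa.span_Un by auto
    moreover have "a \<in> A" using fa.span_eq_iff[of A] A \<open>a \<in> fa.span A\<close> by blast
    ultimately show "\<exists>t. t \<in> fa.span T \<and> s - t \<in> A"
      by (intro exI[of _ t]) simp
  qed
  from bchoice[OF this] obtain g where g0: "\<forall>s\<in>S. g s \<in> fa.span T \<and> s - g s \<in> A"
    by (elim exE)
  then have g: "\<And>s. s \<in> S \<Longrightarrow> g s \<in> fa.span T \<and> s - g s \<in> A" by blast
  have inj: "inj_on g S"
  proof (rule inj_onI, rule ccontr)
    fix s s' assume s: "s \<in> S" "s' \<in> S" "g s = g s'" "s \<noteq> s'"
    define c where "c x = (if x = s then 1 else if x = s' then -1 else (0::'k))" for x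
    have "(\<Sum>x\<in>S. fa_scale (c x) x) = (\<Sum>x\<in>{s,s'}. fa_scale (c x) x)"
      by (rule sum.mono_neutral_right) (use s fS in \<open>auto simp: c_def fa.scale_zero_left\<close>)
    also have "\<dots> = s - s'" using s(4) by (simp add: c_def fa.scale_minus_left)
    also have "\<dots> = (s - g s) - (s' - g s')" using s by simp
    also have "\<dots> \<in> A" by (rule fa.subspace_diff[OF A]) (use g s(1,2) in blast)+
    finally have "\<forall>s\<in>S. c s = 0" by (rule ind')
    then have "c s = 0" using s by blast
    then show False by (simp add: c_def)
  qed
  have indep: "fa.independent (g ` S)"
  proof
    assume "fa.dependent (g ` S)"
    then obtain u v where uv: "v \<in> g ` S" "u v \<noteq> 0" "(\<Sum>v\<in>g ` S. fa_scale (u v) v) = 0"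
      using fa.dependent_finite[of "g ` S"] fS by auto
    have "(\<Sum>s\<in>S. fa_scale (u (g s)) s) =
        (\<Sum>s\<in>S. fa_scale (u (g s)) (s - g s)) + (\<Sum>s\<in>S. fa_scale (u (g s)) (g s))"
      unfolding sum.distrib[symmetric] by (rule sum.cong) (simp_all add: fa.scale_right_diff_distrib)
    also have "(\<Sum>s\<in>S. fa_scale (u (g s)) (g s)) = (\<Sum>v\<in>g ` S. fa_scale (u v) v)"
      by (rule sum.reindex[OF inj, symmetric, unfolded comp_def])
    also have "\<dots> = 0" by (rule uv)
    finally have eq: "(\<Sum>s\<in>S. fa_scale (u (g s)) s) = (\<Sum>s\<in>S. fa_scale (u (g s)) (s - g s))"
      by (simp only: add_0_right)
    have "(\<Sum>s\<in>S. fa_scale (u (g s)) (s - g s)) \<in> A"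
      by (intro fa.subspace_sum[OF A] fa.subspace_scale[OF A]) (use g in blast)
    then have "(\<Sum>s\<in>S. fa_scale (u (g s)) s) \<in> A" by (simp only: eq)
    then have "\<forall>s\<in>S. u (g s) = 0" by (rule ind')
    then show False using uv by auto
  qed
  have "card (g ` S) \<le> card T"
    using fa.independent_span_bound[OF fT indep] g by auto
  then show ?thesis using card_image[OF inj] by simp
qed

lemma abelian_iso:
  fixes scale :: "'k::field \<Rightarrow> 'v::ab_group_add \<Rightarrow> 'v" and br :: "'v \<Rightarrow> 'v \<Rightarrow> 'v"
  assumes vs: "vector_space scale" and dim: "lie_dim_eq scale n" and ab: "\<And>x y. br x y = 0"
  shows "iso_to_abelian scale br n"
proof -
  interpret L: vector_space scale by (rule vs)
  obtain Bf where Bf: "finite Bf" "L.span Bf = UNIV" and dn: "L.dim UNIV = n"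
    using dim unfolding lie_dim_eq_def by blast
  define B where "B = L.extend_basis {}"
  have indB: "L.independent B" and spB: "L.span B = UNIV"
    unfolding B_def using L.independent_extend_basis[OF L.independent_empty]
      L.span_extend_basis[OF L.independent_empty] by auto
  have fB: "finite B" using L.independent_span_bound[OF Bf(1) indB] Bf(2) by auto
  have cB: "card B = n" using L.basis_card_eq_dim[of B UNIV] indB spB dn by auto
  obtain h where h: "bij_betw h {0..<n} B" using ex_bij_betw_nat_finite[OF fB] cB by auto
  have hinj: "inj_on h {..<n}" and himg: "h ` {..<n} = B"
    using h by (auto simp: bij_betw_def lessThan_atLeast0)
  define R where "R x = L.representation B x" for x
  define f where "f x = (\<lambda>i. if i < n then R x (h i) else 0)" for x
  have inS: "x \<in> L.span B" for x using spB by auto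
  have fadd: "f (x + y) = (\<lambda>i. f x i + f y i)" for x y
    by (auto simp: f_def R_def L.representation_add[OF indB inS inS] fun_eq_iff)
  have fscale: "f (scale c x) = (\<lambda>i. c * f x i)" for c x
    by (auto simp: f_def R_def L.representation_scale[OF indB inS] fun_eq_iff)
  have fbr: "f (br x y) = (\<lambda>i. 0)" for x y
    by (auto simp: ab f_def R_def L.representation_zero fun_eq_iff)
  have repx: "x = (\<Sum>b\<in>B. scale (R x b) b)" for x
    unfolding R_def using L.sum_representation_eq[OF indB inS fB] by simp
  have "inj f"
  proof (rule injI)
    fix x y assume e: "f x = f y"
    have "R x b = R y b" for b
    proof (cases "b \<in> B")
      case True
      then obtain i where "i < n" "b = h i" using himg by auto
      then show ?thesis using fun_cong[OF e, of i] by (simp add: f_def)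
    next
      case False
      then show ?thesis using L.representation_ne_zero[of B x b] L.representation_ne_zero[of B y b]
        by (metis R_def)
    qed
    then show "x = y" using repx[of x] repx[of y] by simp
  qed
  moreover have "f ` UNIV = abelian_carrier n"
  proof
    show "f ` UNIV \<subseteq> abelian_carrier n" by (auto simp: f_def abelian_carrier_def)
    show "abelian_carrier n \<subseteq> f ` UNIV"
    proof
      fix v :: "nat \<Rightarrow> 'k" assume v: "v \<in> abelian_carrier n"
      define x where "x = (\<Sum>i<n. scale (v i) (h i))"
      have "R x b = (\<Sum>i<n. v i * (if b = h i then 1 else 0))" for b
        unfolding x_def R_def
        using himg
        apply (simp add: L.representation_sum[OF indB] L.representation_scale[OF indB inS] inS)
        apply (rule sum.cong[OF refl])
        apply (subst L.representation_basis[OF indB])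
        apply auto
        done
      then have "R x (h j) = v j" if "j < n" for j
      proof -
        have "(\<Sum>i<n. v i * (if h j = h i then 1 else 0)) = (\<Sum>i\<in>{j}. v i)"
          by (rule sum.mono_neutral_cong_right)
             (use that hinj in \<open>auto simp: inj_on_def\<close>)
        then show ?thesis using \<open>R x (h j) = _\<close> by simp
      qed
      then have "f x = v" using v by (auto simp: f_def abelian_carrier_def fun_eq_iff)
      then show "v \<in> f ` UNIV" by auto
    qed
  qed
  ultimately have "bij_betw f UNIV (abelian_carrier n)" by (simp add: bij_betw_def)
  then show ?thesis unfolding iso_to_abelian_def using fadd fscale fbr by blast
qed

lemma fa_comm_neg1: "fa_comm (- p) q = - fa_comm p q"
  by (simp add: fa_comm_eq fa_mult_def fun_eq_iff sum_negf)
lemma fa_comm_neg2: "fa_comm q (- p) = - fa_comm q p"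
  by (simp add: fa_comm_eq fa_mult_def fun_eq_iff sum_negf)

lemma lin_span_mem:
  fixes f :: "('x list \<Rightarrow> 'k::field) \<Rightarrow> ('x list \<Rightarrow> 'k)"
  assumes M: "fa.subspace M" and add: "\<And>x y. f (x + y) = f x + f y"
    and sc: "\<And>c x. f (fa_scale c x) = fa_scale c (f x)"
    and G: "\<And>x. x \<in> G \<Longrightarrow> f x \<in> M" and x: "x \<in> fa.span G"
  shows "f x \<in> M"
  using x
proof (induction rule: fa.span_induct_alt)
  case base
  have "f 0 = f (fa_scale 0 0)" by (simp only: fa.scale_zero_left)
  also have "\<dots> = 0" by (subst sc) (rule fa.scale_zero_left)
  finally show ?case using fa.subspace_0[OF M] by (simp only:)
next
  case (step c x y)
  have "f (fa_scale c x + y) = fa_scale c (f x) + f y" by (simp only: add sc)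
  moreover have "fa_scale c (f x) + f y \<in> M"
    using step G[of x] fa.subspace_add[OF M] fa.subspace_scale[OF M] by blast
  ultimately show ?case by (simp only:)
qed

lemma sum_jj: "(\<Sum>j<(n::nat). j * (j + 1) * 3) = n * (n - 1) * (n + 1)"
proof (induction n)
  case 0 then show ?case by simp
next
  case (Suc n) then show ?case by (cases n) (simp_all add: algebra_simps)
qed

lemma card_hall: "card (SIGMA j:{..<n}. {j<..<n} \<times> {j..<n}) = n * (n - 1) * (n + 1) div 3"
proof -
  have "card (SIGMA j:{..<n}. {j<..<n} \<times> {j..<n}) = (\<Sum>j<n. (n - Suc j) * (n - j))"
    by (simp add: card_cartesian_product)
  also have "\<dots> = (\<Sum>j<n. j * (j + 1))"
    using sum.nat_diff_reindex[of "\<lambda>j. j * (j + 1)" n]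
    by (metis (no_types, lifting) Suc_diff_Suc Suc_eq_plus1 diff_Suc_Suc lessThan_iff sum.cong zero_less_diff)
  also have "\<dots> = n * (n - 1) * (n + 1) div 3"
  proof -
    have "(\<Sum>j<n. j * (j + 1)) * 3 = n * (n - 1) * (n + 1)"
      using sum_jj[of n] by (simp add: sum_distrib_right)
    then show ?thesis by (metis nonzero_mult_div_cancel_right zero_neq_numeral)
  qed
  finally show ?thesis .
qed

lemma fa_span_sub_free: "S \<subseteq> free_lie \<Longrightarrow> fa_span S \<subseteq> free_lie"
proof
  fix p assume S: "S \<subseteq> free_lie" and "p \<in> fa_span S"
  from this(2) show "p \<in> free_lie"
    by (induct rule: fa_span.induct) (use S in \<open>auto intro: free_lie.intros\<close>)
qed

lemma fa_comm_zero1: "fa_comm 0 q = 0"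
  by (simp add: fa_comm_eq fa_mult_def fun_eq_iff)

context
  fixes scale :: "'k::field \<Rightarrow> 'v::ab_group_add \<Rightarrow> 'v" and br :: "'v \<Rightarrow> 'v \<Rightarrow> 'v"
  assumes lie: "lie_algebra scale br"
begin

interpretation L: vector_space scale using lie by (simp add: lie_algebra_def)

lemma br_add1: "br (x + y) z = br x z + br y z" using lie by (simp add: lie_algebra_def)
lemma br_add2: "br x (y + z) = br x y + br x z" using lie by (simp add: lie_algebra_def)
lemma br_scale1: "br (scale c x) y = scale c (br x y)" using lie by (simp add: lie_algebra_def)
lemma br_scale2: "br x (scale c y) = scale c (br x y)" using lie by (simp add: lie_algebra_def)

lemma LC_anti: "lower_central scale br (Suc i) \<subseteq> lower_central scale br i"
proof (induction i)
  case 0 then show ?case by simp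
next
  case (Suc i)
  show ?case using Suc by (simp only: lower_central.simps) (intro L.span_mono, blast)
qed

lemma LC_le: "i \<le> j \<Longrightarrow> lower_central scale br j \<subseteq> lower_central scale br i"
  using lift_Suc_antimono_le[of "lower_central scale br", OF LC_anti] by blast

lemma LC_zero: "0 \<in> lower_central scale br i"
  by (cases i) (auto intro: L.span_zero)

lemma LC_top: "lower_central scale br k \<noteq> {0} \<Longrightarrow> lower_central scale br (k + d) = {0} \<Longrightarrow>
  \<exists>m\<ge>k. lower_central scale br m \<noteq> {0} \<and> lower_central scale br (Suc m) = {0}"
proof (induction d arbitrary: k)
  case 0 then show ?case by simp
next
  case (Suc d)
  show ?case
  proof (cases "lower_central scale br (Suc k) = {0}")
    case True then show ?thesis using Suc.prems by blast
  next
    case False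
    from Suc.IH[OF False] Suc.prems(2) obtain m where "m \<ge> Suc k" "lower_central scale br m \<noteq> {0}"
      "lower_central scale br (Suc m) = {0}" by auto
    then show ?thesis by (intro exI[of _ m]) auto
  qed
qed

lemma central_exists:
  assumes nil: "lie_nilpotent scale br" and nab: "br x0 y0 \<noteq> 0"
  shows "\<exists>z. z \<noteq> 0 \<and> z \<in> lower_central scale br 1 \<and> (\<forall>y. br z y = 0)"
proof -
  obtain c where c: "lower_central scale br c = {0}" using nil by (auto simp: lie_nilpotent_def)
  have b1: "br x0 y0 \<in> lower_central scale br 1" by (auto intro!: L.span_base)
  then have ne1: "lower_central scale br 1 \<noteq> {0}" using nab by auto
  have "c \<noteq> 0"
  proof
    assume "c = 0"
    then have "br x0 y0 \<in> lower_central scale br c" by simp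
    then show False using c nab by blast
  qed
  then obtain d where "c = Suc d" using not0_implies_Suc by blast
  then have "c = 1 + d" by simp
  then obtain m where m: "m \<ge> 1" "lower_central scale br m \<noteq> {0}" "lower_central scale br (Suc m) = {0}"
    using LC_top[OF ne1, of d] c by auto
  obtain z where z: "z \<in> lower_central scale br m" "z \<noteq> 0" using m(2) LC_zero[of m] by blast
  have "br z y \<in> lower_central scale br (Suc m)" for y
    using z(1) by (auto intro!: L.span_base)
  then have "\<forall>y. br z y = 0" using m(3) by auto
  moreover have "z \<in> lower_central scale br 1" using LC_le[OF m(1)] z(1) by auto
  ultimately show ?thesis using z(2) by blast
qed

end

lemma F_zero: "0 \<in> free_lie" using free_lie.zero by (simp add: zero_fun_def)
lemma F_add: "p \<in> free_lie \<Longrightarrow> q \<in> free_lie \<Longrightarrow> p + q \<in> free_lie"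
  using free_lie.add by (simp add: fa_add_eq)
lemma F_scale: "p \<in> free_lie \<Longrightarrow> fa_scale c p \<in> free_lie" by (rule free_lie.scale)
lemma F_neg: "p \<in> free_lie \<Longrightarrow> - p \<in> free_lie"
  using F_scale[of p "-1"] by (simp add: fa.scale_minus_left)
lemma F_diff: "p \<in> free_lie \<Longrightarrow> q \<in> free_lie \<Longrightarrow> p - q \<in> free_lie"
  using F_add[of p "-q"] F_neg[of q] by simp
lemma F_comm: "p \<in> free_lie \<Longrightarrow> q \<in> free_lie \<Longrightarrow> fa_comm p q \<in> free_lie" by (rule free_lie.comm)

context
  fixes scale :: "'k::field \<Rightarrow> 'v::ab_group_add \<Rightarrow> 'v" and br :: "'v \<Rightarrow> 'v \<Rightarrow> 'v"
    and \<pi> :: "('x list \<Rightarrow> 'k) \<Rightarrow> 'v"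
  assumes lie: "lie_algebra scale br" and pres: "free_presentation scale br \<pi>"
begin

interpretation L: vector_space scale using lie by (simp add: lie_algebra_def)

lemma pi_add: "p \<in> free_lie \<Longrightarrow> q \<in> free_lie \<Longrightarrow> \<pi> (p + q) = \<pi> p + \<pi> q"
  using pres by (simp add: free_presentation_def fa_add_eq)
lemma pi_scale: "p \<in> free_lie \<Longrightarrow> \<pi> (fa_scale c p) = scale c (\<pi> p)"
  using pres by (simp add: free_presentation_def)
lemma pi_comm: "p \<in> free_lie \<Longrightarrow> q \<in> free_lie \<Longrightarrow> \<pi> (fa_comm p q) = br (\<pi> p) (\<pi> q)"
  using pres by (simp add: free_presentation_def)
lemma pi_surj: "\<exists>p\<in>free_lie. \<pi> p = v"
  using pres unfolding free_presentation_def by (metis UNIV_I imageE)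
lemma pi_zero: "\<pi> 0 = 0"
proof -
  have "\<pi> 0 = \<pi> (fa_scale 0 0)" by (simp only: fa.scale_zero_left)
  also have "\<dots> = scale 0 (\<pi> 0)" by (rule pi_scale[OF F_zero])
  finally show ?thesis by simp
qed
lemma pi_diff: "p \<in> free_lie \<Longrightarrow> q \<in> free_lie \<Longrightarrow> \<pi> (p - q) = \<pi> p - \<pi> q"
proof -
  assume p: "p \<in> free_lie" and q: "q \<in> free_lie"
  have "p - q = p + fa_scale (-1) q" by (simp only: fa.scale_minus_left fa.scale_one) simp
  then have "\<pi> (p - q) = \<pi> p + scale (-1) (\<pi> q)"
    by (simp only: pi_add[OF p F_scale[OF q]] pi_scale[OF q])
  then show ?thesis by (simp add: L.scale_minus_left)
qed

lemma lift_F2: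
  assumes v: "v \<in> L.span {br x y | x y. x \<in> UNIV}"
  shows "\<exists>p\<in>fa_bracket_sp free_lie free_lie. \<pi> p = v"
  using v
proof (induction rule: L.span_induct_alt)
  case base
  have "0 \<in> fa_bracket_sp free_lie free_lie"
    unfolding fa_bracket_sp_def using fa_span.zero by (simp add: zero_fun_def)
  then show ?case using pi_zero by blast
next
  case (step c x y)
  obtain a b where x: "x = br a b" using step(1) by blast
  obtain pa where pa: "pa \<in> free_lie" "\<pi> pa = a" using pi_surj by blast
  obtain pb where pb: "pb \<in> free_lie" "\<pi> pb = b" using pi_surj by blast
  obtain py where py: "py \<in> fa_bracket_sp free_lie free_lie" "\<pi> py = y" using step(2) by blast
  have F2F: "fa_bracket_sp free_lie free_lie \<subseteq> free_lie"
    unfolding fa_bracket_sp_def by (rule fa_span_sub_free) (auto intro: free_lie.comm)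
  define p where "p = fa_scale c (fa_comm pa pb) + py"
  have "p \<in> fa_bracket_sp free_lie free_lie"
    unfolding p_def using py(1) unfolding fa_bracket_sp_def fa_add_eq[symmetric]
    by (intro fa_span.add fa_span.scale) (use pa pb in \<open>auto intro: fa_span.base\<close>)
  moreover have "\<pi> p = scale c x + y"
  proof -
    have pyF: "py \<in> free_lie" using F2F py by blast
    have cF: "fa_comm pa pb \<in> free_lie" using pa pb by (simp add: F_comm)
    have "\<pi> p = \<pi> (fa_scale c (fa_comm pa pb)) + \<pi> py"
      unfolding p_def by (rule pi_add[OF F_scale[OF cF] pyF])
    also have "\<dots> = scale c (br a b) + y"
      by (simp only: pi_scale[OF cF] pi_comm[OF pa(1) pb(1)] pa(2) pb(2) py(2))
    finally show ?thesis using x by simp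
  qed
  ultimately show ?case by blast
qed

lemma lift_span:
  assumes v: "v \<in> L.span (e ` I)" and l: "\<And>i. i \<in> I \<Longrightarrow> l i \<in> free_lie \<and> \<pi> (l i) = e i"
  shows "\<exists>q\<in>free_lie. q \<in> fa.span (l ` I) \<and> \<pi> q = v"
  using v
proof (induction rule: L.span_induct_alt)
  case base
  then show ?case using pi_zero F_zero fa.span_zero by blast
next
  case (step c x y)
  obtain i where i: "i \<in> I" "x = e i" using step(1) by blast
  obtain qy where qy: "qy \<in> free_lie" "qy \<in> fa.span (l ` I)" "\<pi> qy = y" using step(2) by blast
  define q where "q = fa_scale c (l i) + qy"
  have "q \<in> free_lie" unfolding q_def using l[OF i(1)] qy by (simp add: F_add F_scale)
  moreover have "q \<in> fa.span (l ` I)" unfolding q_def using i qy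
    by (intro fa.span_add fa.span_scale) (auto intro: fa.span_base)
  moreover have "\<pi> q = scale c x + y" unfolding q_def using l[OF i(1)] qy i
    by (simp add: pi_add F_scale pi_scale)
  ultimately show ?case by blast
qed

end

context
  fixes scale :: "'k::field \<Rightarrow> 'v::ab_group_add \<Rightarrow> 'v" and br :: "'v \<Rightarrow> 'v \<Rightarrow> 'v"
    and \<pi> :: "('x list \<Rightarrow> 'k) \<Rightarrow> 'v"
  assumes lie: "lie_algebra scale br" and pres: "free_presentation scale br \<pi>"
begin

interpretation L: vector_space scale using lie by (simp add: lie_algebra_def)

lemma nonab_false:
  assumes dim: "lie_dim_eq scale n" and nil: "lie_nilpotent scale br" and nab: "br x0 y0 \<noteq> 0"
    and mult: "two_nilpotent_multiplier_dim_eq scale br \<pi> (n * (n - 1) * (n + 1) div 3)"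
  shows False
proof -
  obtain z where z: "z \<noteq> 0" "z \<in> lower_central scale br 1" "\<forall>y. br z y = 0"
    using central_exists[OF lie nil nab] by blast
  obtain Bf where Bf: "finite Bf" "L.span Bf = UNIV" and dn: "L.dim UNIV = n"
    using dim unfolding lie_dim_eq_def by blast
  have iz: "L.independent {z}"
    using L.independent_insertI[of z "{}"] z(1) L.span_empty by auto
  define B where "B = L.extend_basis {z}"
  have indB: "L.independent B" and spB: "L.span B = UNIV" and zB: "z \<in> B"
    unfolding B_def using L.independent_extend_basis[OF iz] L.span_extend_basis[OF iz]
      L.extend_basis_superset[OF iz] by auto
  have fB: "finite B" using L.independent_span_bound[OF Bf(1) indB] Bf(2) by auto
  have cB: "card B = n" using L.basis_card_eq_dim[of B UNIV] indB spB dn by auto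
  have Bnz: "B \<noteq> {z}"
  proof
    assume "B = {z}"
    then have "x0 \<in> L.span {z}" using spB by auto
    then obtain a where "x0 = scale a z" unfolding L.span_singleton by auto
    then have "br x0 y0 = 0" using br_scale1[OF lie] z(3) by simp
    then show False using nab by simp
  qed
  then obtain b where b: "b \<in> B" "b \<noteq> z" using zB by blast
  have "card {z, b} \<le> card B" using b zB fB by (intro card_mono) auto
  then have n2: "n \<ge> 2" using b cB by simp
  have cBz: "card (B - {z}) = n - 1" using cB zB fB by simp
  obtain g where g: "bij_betw g {0..<n-1} (B - {z})"
    using ex_bij_betw_nat_finite[of "B - {z}"] fB cBz by auto
  define e where "e i = (if i < n - 1 then g i else z)" for i
  have en: "e (n - 1) = z" by (simp add: e_def)
  have "B \<subseteq> e ` {..<n}"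
  proof
    fix x assume x: "x \<in> B"
    show "x \<in> e ` {..<n}"
    proof (cases "x = z")
      case True then show ?thesis using en n2 by (intro image_eqI[of _ _ "n - 1"]) auto
    next
      case False
      then have "x \<in> g ` {0..<n-1}" using g x unfolding bij_betw_def by blast
      then obtain i where "i < n - 1" "g i = x" by auto
      then show ?thesis by (intro image_eqI[of _ _ i]) (auto simp: e_def)
    qed
  qed
  then have sp: "v \<in> L.span (e ` {..<n})" for v using spB L.span_mono by blast
  have "z \<in> L.span {br x y | x y. x \<in> UNIV}" using z(2) by simp
  then obtain pz where pz: "pz \<in> fa_bracket_sp free_lie free_lie" "\<pi> pz = z"
    using lift_F2[OF lie pres] by blast
  have F2F: "fa_bracket_sp free_lie free_lie \<subseteq> free_lie"
    unfolding fa_bracket_sp_def by (rule fa_span_sub_free) (auto intro: free_lie.comm)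
  have "\<forall>i. \<exists>p. p \<in> free_lie \<and> \<pi> p = e i" using pi_surj[OF lie pres] by blast
  then obtain l0 where l0: "\<forall>i. l0 i \<in> free_lie \<and> \<pi> (l0 i) = e i" by (metis choice)
  define l where "l i = (if i = n - 1 then pz else l0 i)" for i
  have l: "l i \<in> free_lie \<and> \<pi> (l i) = e i" for i
    using l0 pz F2F en by (auto simp: l_def)
  define F :: "('x list \<Rightarrow> 'k) set" where "F = free_lie"
  define R where "R = {p \<in> F. \<pi> p = 0}"
  define F3 where "F3 = fa_bracket_sp (fa_bracket_sp F F) F"
  define RFF where "RFF = fa_bracket_sp (fa_bracket_sp R F) F"
  have RF: "R \<subseteq> F" by (auto simp: R_def)
  define G where "G = l ` {..<n} \<union> R"
  have GF: "G \<subseteq> F" using l RF by (auto simp: G_def F_def)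
  have FG: "F \<subseteq> fa.span G"
  proof
    fix p assume p: "p \<in> F"
    obtain q where q: "q \<in> free_lie" "q \<in> fa.span (l ` {..<n})" "\<pi> q = \<pi> p"
      using lift_span[OF lie pres sp, of l] l by blast
    have "p - q \<in> R" using p q by (simp add: R_def F_def F_diff pi_diff[OF lie pres])
    then have "p - q \<in> fa.span G" by (auto simp: G_def intro: fa.span_base)
    moreover have "q \<in> fa.span G" using q(2) fa.span_mono[of "l ` {..<n}" G] by (auto simp: G_def)
    ultimately have "(p - q) + q \<in> fa.span G" by (rule fa.span_add)
    then show "p \<in> fa.span G" by simp
  qed
  define T :: "('x list \<Rightarrow> 'k) \<Rightarrow> ('x list \<Rightarrow> 'k) \<Rightarrow> ('x list \<Rightarrow> 'k) \<Rightarrow> ('x list \<Rightarrow> 'k)"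
    where "T a b c = fa_comm (fa_comm a b) c" for a b c
  define Sig where "Sig = (SIGMA j:{..<n}. {j<..<n} \<times> {j..<n})"
  define H where "H = (\<lambda>(j, i, k). T (l i) (l j) (l k)) ` Sig"
  define M where "M = fa.span (RFF \<union> H)"
  have RFFsub: "fa.subspace RFF"
    unfolding RFF_def fa_bracket_sp_def fa_span_eq by simp
  have Msub: "fa.subspace M" unfolding M_def by simp
  have RFFgen: "T r b c \<in> RFF" if "r \<in> R" "b \<in> F" "c \<in> F" for r b c
    unfolding RFF_def fa_bracket_sp_def T_def using that
    by (intro fa_span.base) (blast intro: fa_span.base)
  have RFFM: "RFF \<subseteq> M" unfolding M_def using fa.span_superset by blast
  have HM: "fa.span H \<subseteq> M" unfolding M_def by (intro fa.span_mono) auto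
  have Tanti: "T a b c = - T b a c" for a b c
    unfolding T_def by (metis fa_comm_anti fa_comm_neg1)
  have Tjac: "T a b c = - T b c a - T c a b" for a b c
    using fa_jacobi[of a b c] unfolding T_def by (simp add: eq_neg_iff_add_eq_0 algebra_simps)
  have hall1: "T (l i) (l j) (l k) \<in> fa.span H" if "j < i" "i < n" "k < n" for i j k
  proof (cases "j \<le> k")
    case True
    then have "(j, i, k) \<in> Sig" using that by (auto simp: Sig_def)
    then show ?thesis unfolding H_def by (intro fa.span_base) force
  next
    case False
    have s1: "(k, j, i) \<in> Sig" "(k, i, j) \<in> Sig" using that False by (auto simp: Sig_def)
    have "T (l i) (l j) (l k) = - T (l j) (l k) (l i) + T (l i) (l k) (l j)"
      using Tjac[of "l i" "l j" "l k"] Tanti[of "l k" "l i" "l j"] by simp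
    moreover have "T (l j) (l k) (l i) \<in> H" "T (l i) (l k) (l j) \<in> H"
      using s1 unfolding H_def by force+
    ultimately show ?thesis
      by (metis fa.span_add fa.span_base fa.span_neg)
  qed
  have hall: "T (l i) (l j) (l k) \<in> fa.span H" if "i < n" "j < n" "k < n" for i j k
  proof -
    consider "j < i" | "i = j" | "i < j" by linarith
    then show ?thesis
    proof cases
      case 1 then show ?thesis using hall1 that by blast
    next
      case 2 then show ?thesis by (simp add: T_def fa_comm_self fa_comm_zero1 fa.span_zero)
    next
      case 3 then show ?thesis using hall1[of i j k] that Tanti[of "l i" "l j" "l k"]
        by (metis fa.span_neg)
    qed
  qed
  have Gcase: "T a b c \<in> M" if abc: "a \<in> G" "b \<in> G" "c \<in> G" for a b c
  proof (cases "a \<in> R")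
    case True then show ?thesis using RFFgen abc GF RFFM by blast
  next
    case aR: False
    show ?thesis
    proof (cases "b \<in> R")
      case True
      then have "T b a c \<in> M" using RFFgen abc GF RFFM by blast
      then show ?thesis using Tanti[of a b c] fa.subspace_neg[OF Msub] by metis
    next
      case bR: False
      show ?thesis
      proof (cases "c \<in> R")
        case True
        have "T a b c = T c b a - T c a b"
          using Tjac[of a b c] Tanti[of b c a] by simp
        moreover have "T c b a \<in> M" "T c a b \<in> M" using RFFgen True abc GF RFFM by blast+
        ultimately show ?thesis using fa.subspace_diff[OF Msub] by metis
      next
        case False
        then obtain i j k where "i < n" "j < n" "k < n" "a = l i" "b = l j" "c = l k"
          using aR bR abc unfolding G_def by blast
        then show ?thesis using hall HM by blast
      qed
    qed
  qed
  have Tadd1: "T (x + y) b c = T x b c + T y b c" for x y b c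
    by (simp add: T_def fa_comm_add1)
  have Tadd2: "T a (x + y) c = T a x c + T a y c" for x y a c
    by (simp add: T_def fa_comm_add1 fa_comm_add2)
  have Tadd3: "T a b (x + y) = T a b x + T a b y" for x y a b
    by (simp add: T_def fa_comm_add2)
  have Tsc1: "T (fa_scale s x) b c = fa_scale s (T x b c)" for s x b c
    by (simp add: T_def fa_comm_scale1)
  have Tsc2: "T a (fa_scale s x) c = fa_scale s (T a x c)" for s x a c
    by (simp add: T_def fa_comm_scale1 fa_comm_scale2)
  have Tsc3: "T a b (fa_scale s x) = fa_scale s (T a b x)" for s x a b
    by (simp add: T_def fa_comm_scale2)
  have tri3: "T a b c \<in> M" if "a \<in> G" "b \<in> G" "c \<in> fa.span G" for a b c
    using lin_span_mem[OF Msub, of "T a b", OF Tadd3 Tsc3 _ that(3)] Gcase that by blast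
  have tri2: "T a b c \<in> M" if "a \<in> G" "b \<in> fa.span G" "c \<in> fa.span G" for a b c
    using lin_span_mem[OF Msub, of "\<lambda>b. T a b c", OF Tadd2 Tsc2 _ that(2)] tri3 that by blast
  have tri: "T a b c \<in> M" if "a \<in> fa.span G" "b \<in> fa.span G" "c \<in> fa.span G" for a b c
    using lin_span_mem[OF Msub, of "\<lambda>a. T a b c", OF Tadd1 Tsc1 _ that(1)] tri2 that by blast
  have F3M: "F3 \<subseteq> M"
  proof
    fix x assume "x \<in> F3"
    then have "x \<in> fa.span {fa_comm u c |u c. u \<in> fa.span {fa_comm a b |a b. a \<in> F \<and> b \<in> F} \<and> c \<in> F}"
      unfolding F3_def fa_bracket_sp_def fa_span_eq .
    moreover have "{fa_comm u c |u c. u \<in> fa.span {fa_comm a b |a b. a \<in> F \<and> b \<in> F} \<and> c \<in> F} \<subseteq> M"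
    proof
      fix y assume "y \<in> {fa_comm u c |u c. u \<in> fa.span {fa_comm a b |a b. a \<in> F \<and> b \<in> F} \<and> c \<in> F}"
      then obtain u c where y: "y = fa_comm u c" "u \<in> fa.span {fa_comm a b |a b. a \<in> F \<and> b \<in> F}" "c \<in> F"
        by blast
      have "(\<lambda>u. fa_comm u c) u \<in> M"
      proof (rule lin_span_mem[OF Msub _ _ _ y(2)])
        show "fa_comm (x + y) c = fa_comm x c + fa_comm y c" for x y by (rule fa_comm_add1)
        show "fa_comm (fa_scale s x) c = fa_scale s (fa_comm x c)" for s x by (rule fa_comm_scale1)
        fix w assume "w \<in> {fa_comm a b |a b. a \<in> F \<and> b \<in> F}"
        then obtain a b where "w = fa_comm a b" "a \<in> F" "b \<in> F" by blast
        then show "fa_comm w c \<in> M" using tri[of a b c] FG y(3) by (auto simp: T_def)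
      qed
      then show "y \<in> M" using y(1) by simp
    qed
    ultimately show "x \<in> M" using fa.span_minimal[OF _ Msub] by blast
  qed
  define t0 where "t0 = T (l (n - 1)) (l 0) (l (n - 1))"
  have t0H: "t0 \<in> H"
  proof -
    have "(0, n - 1, n - 1) \<in> Sig" using n2 by (auto simp: Sig_def)
    then show ?thesis unfolding H_def t0_def by force
  qed
  have t0R: "t0 \<in> RFF"
  proof -
    define \<rho> where "\<rho> = fa_comm (l (n - 1)) (l 0)"
    have "\<rho> \<in> F" using l by (simp add: \<rho>_def F_def F_comm)
    moreover have "\<pi> \<rho> = 0"
      using l[of "n - 1"] l[of 0] en z(3) by (simp add: \<rho>_def pi_comm[OF lie pres])
    ultimately have \<rho>R: "\<rho> \<in> R" by (simp add: R_def)
    have "pz \<in> fa.span {fa_comm u v |u v. u \<in> F \<and> v \<in> F}"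
      using pz(1) unfolding fa_bracket_sp_def fa_span_eq F_def .
    then have "(\<lambda>x. fa_comm \<rho> x) pz \<in> RFF"
    proof (rule lin_span_mem[OF RFFsub, rotated 3])
      show "fa_comm \<rho> (x + y) = fa_comm \<rho> x + fa_comm \<rho> y" for x y by (rule fa_comm_add2)
      show "fa_comm \<rho> (fa_scale s x) = fa_scale s (fa_comm \<rho> x)" for s x by (rule fa_comm_scale2)
      fix w assume "w \<in> {fa_comm u v |u v. u \<in> F \<and> v \<in> F}"
      then obtain u v where w: "w = fa_comm u v" "u \<in> F" "v \<in> F" by blast
      have "fa_comm \<rho> w = - T u v \<rho>" unfolding w(1) T_def by (rule fa_comm_anti)
      also have "\<dots> = T v \<rho> u + T \<rho> u v" using Tjac[of u v \<rho>] by simp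
      also have "\<dots> = - T \<rho> v u + T \<rho> u v" using Tanti[of v \<rho> u] by simp
      finally have eq: "fa_comm \<rho> w = - T \<rho> v u + T \<rho> u v" .
      have "T \<rho> v u \<in> RFF" "T \<rho> u v \<in> RFF" using RFFgen \<rho>R w by blast+
      then show "fa_comm \<rho> w \<in> RFF" unfolding eq
        using fa.subspace_add[OF RFFsub] fa.subspace_neg[OF RFFsub] by blast
    qed
    moreover have "t0 = fa_comm \<rho> pz" unfolding t0_def T_def \<rho>_def l_def by simp
    ultimately show ?thesis by simp
  qed
  have M2: "M \<subseteq> fa.span (RFF \<union> (H - {t0}))"
    unfolding M_def
  proof (rule fa.span_minimal)
    show "RFF \<union> H \<subseteq> fa.span (RFF \<union> (H - {t0}))"
      using t0R fa.span_superset[of "RFF \<union> (H - {t0})"] by blast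
  qed simp
  have fSig: "finite Sig" by (simp add: Sig_def)
  have fH: "finite H" unfolding H_def using fSig by simp
  have cH: "card H \<le> n * (n - 1) * (n + 1) div 3"
    unfolding H_def using card_image_le[OF fSig] card_hall[of n] by (simp add: Sig_def)
  have cH0: "card H \<ge> 1" using t0H fH by (metis One_nat_def Suc_leI card_gt_0_iff empty_iff)
  obtain S where S: "S \<subseteq> R \<inter> F3" "finite S" "card S = n * (n - 1) * (n + 1) div 3"
    and ind: "\<forall>c. (\<lambda>w. \<Sum>s\<in>S. c s * s w) \<in> RFF \<longrightarrow> (\<forall>s\<in>S. c s = 0)"
    using mult unfolding two_nilpotent_multiplier_dim_eq_def Let_def fa_quot_dim_eq_def
      F_def R_def F3_def RFF_def by blast
  have "S \<subseteq> fa.span (RFF \<union> (H - {t0}))" using S(1) F3M M2 by blast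
  then have "card S \<le> card (H - {t0})"
    using quot_card_bound[OF RFFsub S(2) _ _ ind] fH by blast
  also have "\<dots> = card H - 1" using t0H fH by simp
  finally show False using S(3) cH cH0 by linarith
qed

end


theorem corollary2p15:
  fixes scale :: "'k::field \<Rightarrow> 'v::ab_group_add \<Rightarrow> 'v"
    and br :: "'v \<Rightarrow> 'v \<Rightarrow> 'v"
    and \<pi> :: "('x list \<Rightarrow> 'k) \<Rightarrow> 'v"
    and n :: nat
  assumes "lie_algebra scale br"
    and "lie_dim_eq scale n"
    and "lie_nilpotent scale br"
    and "free_presentation scale br \<pi>"
    and "two_nilpotent_multiplier_dim_eq scale br \<pi> (n * (n - 1) * (n + 1) div 3)"
  shows "iso_to_abelian scale br n"
proof (cases "\<forall>x y. br x y = 0")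
  case True
  have "vector_space scale" using assms(1) by (simp add: lie_algebra_def)
  then show ?thesis using abelian_iso assms(2) True by blast
next
  case False
  then obtain x0 y0 where "br x0 y0 \<noteq> 0" by blast
  then show ?thesis using nonab_false[OF assms(1) assms(4) assms(2) assms(3) _ assms(5)] by blast
qed

end
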